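(* Let $X,Y\subseteq\Sigma^*$ be regular languages and let $d$ be the number of states of the minimal deterministic finite automaton recognizing $Y$. Then $\overrightarrow{\mathrm{AH}}_{\mathrm{ned}}(X,Y)\ge\frac{1}{d}\cdot\overrightarrow{\mathrm{AC}}(X,Y)$.
   Context: An edit path from $x$ to $y$ is a sequence $p=(a_1,b_1)\cdots(a_n,b_n)$ with $(a_i,b_i)\in(\Sigma\cup\{\varepsilon\})^2\setminus\{(\varepsilon,\varepsilon)\}$, $a_1\cdots a_n=x$, $b_1\cdots b_n=y$; $|p|=n$ and $\mathrm{wgt}(p)=|\{i:a_i\ne b_i\}|$. $\mathrm{ed}(x,y)=\min_p\mathrm{wgt}(p)$; $\mathrm{ned}(x,y)=\min_p\mathrm{wgt}(p)/|p|$ ($\mathrm{ned}(\varepsilon,\varepsilon)=0$). $\overrightarrow{\mathrm{AH}}_{\mathrm{ned}}(X,Y)=\lim_{k\to\infty}\sup_{x\in X,|x|\ge k}\inf_{y\in Y}\mathrm{ned}(x,y)$ and $\overrightarrow{\mathrm{AC}}(X,Y)=\lim_{n\to\infty}\sup_{x\in X,|x|\ge n}\inf_{y\in Y}\frac{\mathrm{ed}(x,y)}{|x|}$. *)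

theory Defs
  imports "HOL-Analysis.Analysis" "HOL-Library.Extended_Real"
begin

text \<open>Edit operations: a pair (a,b) with a,b in Alph plus epsilon (None = epsilon),
  not both epsilon. An edit path is a list of such pairs.\<close>

type_synonym 'a edit_path = "('a option \<times> 'a option) list"

definition edit_path :: "'a list \<Rightarrow> 'a list \<Rightarrow> 'a edit_path \<Rightarrow> bool" where
  "edit_path x y p \<longleftrightarrow>
     (\<forall>e \<in> set p. e \<noteq> (None, None)) \<and>
     List.map_filter id (map fst p) = x \<and>
     List.map_filter id (map snd p) = y"

definition wgt :: "'a edit_path \<Rightarrow> nat" where
  "wgt p = length (filter (\<lambda>(a, b). a \<noteq> b) p)"

definition ed :: "'a list \<Rightarrow> 'a list \<Rightarrow> nat" where
  "ed x y = (LEAST w. \<exists>p. edit_path x y p \<and> wgt p = w)"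

definition ned :: "'a list \<Rightarrow> 'a list \<Rightarrow> real" where
  "ned x y = (if x = [] \<and> y = [] then 0
              else Inf {real (wgt p) / real (length p) | p. edit_path x y p})"

text \<open>Directed asymptotic Hausdorff distance w.r.t. ned, and directed asymptotic
  edit-distance cost (values in the extended reals; sup over the empty set is -infinity,
  inf over the empty set is +infinity).\<close>

definition AH_ned :: "'a list set \<Rightarrow> 'a list set \<Rightarrow> ereal" where
  "AH_ned X Y = lim (\<lambda>k::nat. SUP x \<in> {x \<in> X. k \<le> length x}. INF y \<in> Y. ereal (ned x y))"

definition AC :: "'a list set \<Rightarrow> 'a list set \<Rightarrow> ereal" where
  "AC X Y = lim (\<lambda>n::nat. SUP x \<in> {x \<in> X. n \<le> length x}.
                 INF y \<in> Y. ereal (real (ed x y) / real (length x)))"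

definition dfa :: "'a set \<Rightarrow> nat set \<Rightarrow> nat \<Rightarrow> (nat \<Rightarrow> 'a \<Rightarrow> nat) \<Rightarrow> nat set \<Rightarrow> bool" where
  "dfa Alph Q q0 \<delta> F \<longleftrightarrow> finite Q \<and> q0 \<in> Q \<and> F \<subseteq> Q \<and>
     (\<forall>q \<in> Q. \<forall>a \<in> Alph. \<delta> q a \<in> Q)"

definition dfa_lang :: "'a set \<Rightarrow> nat \<Rightarrow> (nat \<Rightarrow> 'a \<Rightarrow> nat) \<Rightarrow> nat set \<Rightarrow> 'a list set" where
  "dfa_lang Alph q0 \<delta> F = {w \<in> lists Alph. foldl \<delta> q0 w \<in> F}"

definition regular :: "'a set \<Rightarrow> 'a list set \<Rightarrow> bool" where
  "regular Alph L \<longleftrightarrow> (\<exists>Q q0 \<delta> F. dfa Alph Q q0 \<delta> F \<and> dfa_lang Alph q0 \<delta> F = L)"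

definition min_dfa_states :: "'a set \<Rightarrow> 'a list set \<Rightarrow> nat" where
  "min_dfa_states Alph L = (LEAST n. \<exists>Q q0 \<delta> F. dfa Alph Q q0 \<delta> F \<and>
       dfa_lang Alph q0 \<delta> F = L \<and> card Q = n)"

end

theory Submission
  imports Defs
begin


definition fw :: "'a edit_path \<Rightarrow> 'a list" where "fw p = List.map_filter id (map fst p)"
definition sw :: "'a edit_path \<Rightarrow> 'a list" where "sw p = List.map_filter id (map snd p)"
definition insn :: "'a edit_path \<Rightarrow> nat" where "insn p = length (filter (\<lambda>e. fst e = None) p)"
definition subn :: "'a edit_path \<Rightarrow> nat" where
  "subn p = length (filter (\<lambda>e. fst e \<noteq> None \<and> fst e \<noteq> snd e) p)"

lemma mf_append: "List.map_filter f (xs @ ys) = List.map_filter f xs @ List.map_filter f ys"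
  by (induct xs) (auto split: option.split)

lemma fw_Cons: "fw (e # p) = (case fst e of None \<Rightarrow> fw p | Some a \<Rightarrow> a # fw p)"
  by (cases "fst e") (simp_all add: fw_def)
lemma sw_Cons: "sw (e # p) = (case snd e of None \<Rightarrow> sw p | Some a \<Rightarrow> a # sw p)"
  by (cases "snd e") (simp_all add: sw_def)
lemma fw_Nil[simp]: "fw [] = []" by (simp add: fw_def)
lemma sw_Nil[simp]: "sw [] = []" by (simp add: sw_def)
lemma fw_append[simp]: "fw (p @ q) = fw p @ fw q" by (simp add: fw_def mf_append)
lemma sw_append[simp]: "sw (p @ q) = sw p @ sw q" by (simp add: sw_def mf_append)
lemma insn_append[simp]: "insn (p @ q) = insn p + insn q" by (simp add: insn_def)
lemma subn_append[simp]: "subn (p @ q) = subn p + subn q" by (simp add: subn_def)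

lemma basics:
  assumes "\<forall>e\<in>set p. e \<noteq> (None, None)"
  shows "length p = insn p + length (fw p) \<and> wgt p = insn p + subn p \<and> subn p \<le> length (fw p)"
  using assms
proof (induct p)
  case Nil
  then show ?case by (simp add: insn_def subn_def wgt_def)
next
  case (Cons e p)
  obtain a b where e: "e = (a, b)" by (cases e)
  show ?case using Cons e
    by (cases a; cases b) (auto simp: insn_def subn_def wgt_def fw_Cons)
qed

lemma ins_path:
  "fw (map (\<lambda>b. (None, Some b)) w) = [] \<and> sw (map (\<lambda>b. (None, Some b)) w) = w \<and>
   insn (map (\<lambda>b. (None, Some b)) w) = length w \<and> subn (map (\<lambda>b. (None, Some b)) w) = 0"
  by (induct w) (auto simp: fw_Cons sw_Cons insn_def subn_def)

lemma del_path:
  "fw (map (\<lambda>b. (Some b, None)) w) = w \<and> sw (map (\<lambda>b. (Some b, None)) w) = []"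
  by (induct w) (auto simp: fw_Cons sw_Cons)

lemma all_ins:
  "\<forall>e\<in>set p. fst e = None \<Longrightarrow> fw p = [] \<and> subn p = 0 \<and> insn p = length p"
  by (induct p) (auto simp: fw_Cons insn_def subn_def)

lemma fold_in_Q:
  assumes "dfa Alph Q q0 \<delta> F"
  shows "q \<in> Q \<Longrightarrow> w \<in> lists Alph \<Longrightarrow> foldl \<delta> q w \<in> Q"
  using assms by (induct w arbitrary: q) (auto simp: dfa_def)

lemma short_word:
  assumes D: "dfa Alph Q q0 \<delta> F" and q: "q \<in> Q"
  shows "w \<in> lists Alph \<Longrightarrow> \<exists>w'. w' \<in> lists Alph \<and> foldl \<delta> q w' = foldl \<delta> q w \<and>
           length w' < card Q \<and> length w' \<le> length w"
proof (induct w rule: length_induct)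
  case (1 w)
  show ?case
  proof (cases "length w < card Q")
    case True
    then show ?thesis using 1 by blast
  next
    case False
    define f where "f i = foldl \<delta> q (take i w)" for i
    have fin: "finite Q" using D by (simp add: dfa_def)
    have sub: "f ` {0..length w} \<subseteq> Q"
    proof
      fix z assume "z \<in> f ` {0..length w}"
      then obtain i where "z = f i" by auto
      moreover have "take i w \<in> lists Alph" using 1(2)
        by (meson in_listsD in_listsI in_set_takeD)
      ultimately show "z \<in> Q" using fold_in_Q[OF D q] f_def by auto
    qed
    have "\<not> inj_on f {0..length w}"
    proof
      assume "inj_on f {0..length w}"
      from card_inj_on_le[OF this sub fin] False show False by simp
    qed
    then obtain i j where ij: "i \<in> {0..length w}" "j \<in> {0..length w}" "i \<noteq> j" "f i = f j"
      unfolding inj_on_def by blast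
    obtain i j where ij: "i < j" "j \<le> length w" "f i = f j"
    proof (cases "i < j")
      case True then show ?thesis using ij that by auto
    next
      case False then show ?thesis using ij that[of j i] by auto
    qed
    define w2 where "w2 = take i w @ drop j w"
    have len: "length w2 < length w" using ij by (simp add: w2_def)
    have inl: "w2 \<in> lists Alph" using 1(2) unfolding w2_def
      by (meson append_in_lists_conv in_listsD in_listsI in_set_dropD in_set_takeD)
    have "foldl \<delta> q w2 = foldl \<delta> (f j) (drop j w)" using ij by (simp add: w2_def f_def)
    also have "\<dots> = foldl \<delta> q w" unfolding f_def
      by (metis append_take_drop_id foldl_append)
    finally have eq: "foldl \<delta> q w2 = foldl \<delta> q w" .
    from 1(1)[rule_format, OF len inl] obtain w' where
      "w' \<in> lists Alph" "foldl \<delta> q w' = foldl \<delta> q w2" "length w' < card Q" "length w' \<le> length w2"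
      by blast
    then show ?thesis using eq len by (intro exI[of _ w']) auto
  qed
qed



lemma pump_path:
  fixes p :: "'a edit_path" and Alph :: "'a set"
  assumes D: "dfa Alph Q q0 \<delta> F"
  shows "q \<in> Q \<Longrightarrow> \<forall>e\<in>set p. e \<noteq> (None, None) \<Longrightarrow> sw p \<in> lists Alph \<Longrightarrow>
    \<exists>p'. (\<forall>e\<in>set p'. e \<noteq> (None, None)) \<and> sw p' \<in> lists Alph \<and> fw p' = fw p \<and>
       subn p' = subn p \<and> foldl \<delta> q (sw p') = foldl \<delta> q (sw p) \<and> insn p' \<le> insn p \<and>
       insn p' \<le> (card Q - 1) * (length (fw p) + 1)"
proof (induct p arbitrary: q rule: length_induct)
  case (1 p)
  define p1 where "p1 = takeWhile (\<lambda>e. fst e = None) p"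
  have p1N: "\<forall>e\<in>set p1. fst e = None" unfolding p1_def by (meson set_takeWhileD)
  note A1 = all_ins[OF p1N]
  obtain w' where w': "w' \<in> lists Alph" "foldl \<delta> q w' = foldl \<delta> q (sw p1)"
      "length w' < card Q" "length w' \<le> length (sw p1)"
  proof -
    have "sw p1 \<in> lists Alph" using 1(4) unfolding p1_def
      by (metis in_lists_conv_set sw_append takeWhile_dropWhile_id Un_iff set_append)
    then show ?thesis using short_word[OF D 1(2)] that by blast
  qed
  have lsw: "length (sw p1) \<le> insn p1"
  proof -
    have "length (sw p1) \<le> length p1" by (simp add: sw_def map_filter_def)
    then show ?thesis using A1 by simp
  qed
  define P :: "'a edit_path" where "P = map (\<lambda>b. (None, Some b)) w'"
  note IP = ins_path[of w', folded P_def]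
  have PN: "\<forall>e\<in>set P. e \<noteq> (None, None)" by (auto simp: P_def)
  show ?case
  proof (cases "dropWhile (\<lambda>e. fst e = None) p")
    case Nil
    then have pp: "p = p1" unfolding p1_def by (metis append_Nil2 takeWhile_dropWhile_id)
    have "\<forall>e\<in>set P. e \<noteq> (None, None)" "sw P \<in> lists Alph" "fw P = fw p" "subn P = subn p"
      "foldl \<delta> q (sw P) = foldl \<delta> q (sw p)" "insn P \<le> insn p"
      "insn P \<le> (card Q - 1) * (length (fw p) + 1)"
      using IP PN w' A1 pp lsw by auto
    then show ?thesis by blast
  next
    case (Cons e p2)
    then have pp: "p = p1 @ e # p2" and fe: "fst e \<noteq> None" unfolding p1_def
      by (auto simp: dropWhile_eq_Cons_conv)
    define q1 where "q1 = foldl \<delta> q (sw p1)"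
    define q2 where "q2 = foldl \<delta> q1 (sw [e])"
    have swp: "sw p = sw p1 @ sw [e] @ sw p2" unfolding pp
      by (metis append_Cons append_Nil sw_append)
    have swl: "sw [e] \<in> lists Alph" "sw p2 \<in> lists Alph" "sw p1 \<in> lists Alph"
      using 1(4) unfolding swp by auto
    have "q1 \<in> Q" unfolding q1_def using fold_in_Q[OF D 1(2) swl(3)] .
    then have q2: "q2 \<in> Q" unfolding q2_def using fold_in_Q[OF D _ swl(1)] by blast
    have lenp2: "length p2 < length p" using pp by simp
    from 1(1)[rule_format, OF lenp2, of q2] q2 1(3) swl pp obtain p2' where
      p2': "\<forall>e\<in>set p2'. e \<noteq> (None, None)" "sw p2' \<in> lists Alph" "fw p2' = fw p2"
       "subn p2' = subn p2" "foldl \<delta> q2 (sw p2') = foldl \<delta> q2 (sw p2)" "insn p2' \<le> insn p2"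
       "insn p2' \<le> (card Q - 1) * (length (fw p2) + 1)"
      by auto
    have fwe: "length (fw [e]) = 1" "insn [e] = 0" using fe
      by (auto simp: fw_Cons insn_def split: option.split)
    have ee: "e # p2' = [e] @ p2'" "e # p2 = [e] @ p2" by simp_all
    show ?thesis
    proof (rule exI[of _ "P @ e # p2'"], intro conjI)
      show "\<forall>e\<in>set (P @ e # p2'). e \<noteq> (None, None)" using PN p2'(1) 1(3) pp by auto
      show "sw (P @ e # p2') \<in> lists Alph" using IP w' swl p2' by (simp only: ee sw_append; auto)
      show "fw (P @ e # p2') = fw p" using IP A1 p2' pp by (simp only: ee fw_append; auto)
      show "subn (P @ e # p2') = subn p" using IP A1 p2' pp by (simp only: ee subn_append; auto)
      show "foldl \<delta> q (sw (P @ e # p2')) = foldl \<delta> q (sw p)" using IP w' p2' pp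
        by (simp only: ee sw_append foldl_append; simp add: q1_def q2_def)
      show "insn (P @ e # p2') \<le> insn p" using IP w' p2' pp lsw fwe
        by (simp only: ee insn_append; auto)
      have "insn (P @ e # p2') = length w' + insn p2'" using IP fwe by (simp only: ee insn_append; auto)
      also have "\<dots> \<le> (card Q - 1) + (card Q - 1) * (length (fw p2) + 1)"
        using w'(3) p2'(7) by linarith
      also have "\<dots> = (card Q - 1) * (length (fw p) + 1)"
        using pp A1 fwe by (simp only: ee fw_append; simp add: algebra_simps)
      finally show "insn (P @ e # p2') \<le> (card Q - 1) * (length (fw p) + 1)" .
    qed
  qed
qed

lemma arith_key:
  fixes I' I K S n :: nat
  assumes "I' \<le> I" "I' \<le> K" "S \<le> n"
  shows "(I' + S) * (n + I) \<le> (K + n) * (I + S)"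
proof (cases "I \<le> K")
  case True
  have "(I' + S) * (n + I) \<le> (I + S) * (n + I)" using assms by (intro mult_right_mono) auto
  also have "\<dots> \<le> (I + S) * (n + K)" using True by (intro mult_left_mono) auto
  finally show ?thesis by (simp add: algebra_simps)
next
  case False
  obtain t where t: "n = S + t" using assms(3) le_Suc_ex by blast
  obtain u where u: "I = K + u" using False by (metis le_Suc_ex nat_le_linear)
  have "(I' + S) * (n + I) \<le> (K + S) * (n + I)" using assms by (intro mult_right_mono) auto
  moreover have "(K + S) * (n + I) + t * u = (K + n) * (I + S)" unfolding t u
    by (simp add: algebra_simps)
  ultimately show ?thesis by linarith
qed



lemma edit_path_iff: "edit_path x y p \<longleftrightarrow> (\<forall>e\<in>set p. e \<noteq> (None, None)) \<and> fw p = x \<and> sw p = y"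
  by (simp add: edit_path_def fw_def sw_def)

lemma path_exists: "edit_path x y (map (\<lambda>a. (Some a, None)) x @ map (\<lambda>b. (None, Some b)) y)"
  unfolding edit_path_iff using del_path[of x] ins_path[of y] by auto

definition RR :: "'a list \<Rightarrow> 'a list \<Rightarrow> real set" where
  "RR x y = {real (wgt p) / real (length p) | p. edit_path x y p}"

lemma RR_ne: "RR x y \<noteq> {}" unfolding RR_def using path_exists by blast

lemma RR_nonneg: "r \<in> RR x y \<Longrightarrow> 0 \<le> r" unfolding RR_def by auto

lemma ned_nonneg: "0 \<le> ned x y"
proof -
  have "0 \<le> Inf (RR x y)" using RR_ne RR_nonneg by (intro cInf_greatest) auto
  then show ?thesis unfolding ned_def RR_def by simp
qed

lemma key:
  assumes D: "dfa Alph Q q0 \<delta> F" and Y: "Y = dfa_lang Alph q0 \<delta> F" and y: "y \<in> Y"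
    and p: "edit_path x y p" and x: "x \<noteq> []"
  shows "\<exists>y'\<in>Y. real (ed x y') / real (length x) \<le>
     (real (card Q) + real (card Q - 1) / real (length x)) * (real (wgt p) / real (length p))"
proof -
  have q0: "q0 \<in> Q" using D by (simp add: dfa_def)
  have yl: "y \<in> lists Alph" "foldl \<delta> q0 y \<in> F" using y Y by (auto simp: dfa_lang_def)
  have pN: "\<forall>e\<in>set p. e \<noteq> (None, None)" "fw p = x" "sw p = y" using p by (auto simp: edit_path_iff)
  obtain p' where p': "\<forall>e\<in>set p'. e \<noteq> (None, None)" "sw p' \<in> lists Alph" "fw p' = fw p"
       "subn p' = subn p" "foldl \<delta> q0 (sw p') = foldl \<delta> q0 (sw p)" "insn p' \<le> insn p"
       "insn p' \<le> (card Q - 1) * (length (fw p) + 1)"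
    using pump_path[OF D q0 pN(1)] pN yl by auto
  define y' where "y' = sw p'"
  have y'Y: "y' \<in> Y" using p' pN yl Y by (auto simp: y'_def dfa_lang_def)
  have ep: "edit_path x y' p'" using p' pN by (auto simp: edit_path_iff y'_def)
  have edle: "ed x y' \<le> wgt p'" unfolding ed_def using ep by (intro Least_le) blast
  define n where "n = length x"
  have n0: "n > 0" using x by (simp add: n_def)
  note B = basics[OF pN(1)] and B' = basics[OF p'(1)]
  define K where "K = (card Q - 1) * (n + 1)"
  have ar: "(insn p' + subn p) * (n + insn p) \<le> (K + n) * (insn p + subn p)"
    using p' B pN by (intro arith_key) (auto simp: K_def n_def)
  have h: "ed x y' * length p \<le> (K + n) * wgt p"
  proof -
    have "ed x y' * length p \<le> wgt p' * length p" using edle by simp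
    also have "\<dots> = (insn p' + subn p) * (n + insn p)" using B B' p' pN by (simp add: n_def)
    also have "\<dots> \<le> (K + n) * wgt p" using ar B by simp
    finally show ?thesis .
  qed
  have L0: "length p > 0" using B pN n0 n_def by simp
  have cQ: "card Q \<ge> 1" using D q0 by (metis One_nat_def Suc_leI card_gt_0_iff dfa_def empty_iff)
  have hr: "real (ed x y') * real (length p) \<le> real (K + n) * real (wgt p)"
    using h by (metis of_nat_le_iff of_nat_mult)
  have Keq: "real (K + n) / real n = real (card Q) + real (card Q - 1) / real n"
    using n0 cQ by (simp add: K_def field_simps of_nat_diff)
  have "real (ed x y') / real n \<le> real (K + n) / real n * (real (wgt p) / real (length p))"
    using hr n0 L0 by (simp add: field_simps)
  then have "real (ed x y') / real n \<le> (real (card Q) + real (card Q - 1) / real n) * (real (wgt p) / real (length p))"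
    by (simp only: Keq)
  then show ?thesis using y'Y unfolding n_def by blast
qed



lemma ned_bound:
  assumes D: "dfa Alph Q q0 \<delta> F" and Y: "Y = dfa_lang Alph q0 \<delta> F" and y: "y \<in> Y"
    and x: "x \<noteq> []"
  shows "(INF y'\<in>Y. ereal (real (ed x y') / real (length x))) \<le>
     ereal ((real (card Q) + real (card Q - 1) / real (length x)) * ned x y)"
proof -
  define c where "c = real (card Q) + real (card Q - 1) / real (length x)"
  define E where "E = (INF y'\<in>Y. ereal (real (ed x y') / real (length x)))"
  have q0: "q0 \<in> Q" using D by (simp add: dfa_def)
  have cQ: "card Q \<ge> 1" using D q0 by (metis One_nat_def Suc_leI card_gt_0_iff dfa_def empty_iff)
  have c0: "c > 0" unfolding c_def using cQ by (simp add: add_pos_nonneg)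
  have nedI: "ned x y = Inf (RR x y)" using x by (simp add: ned_def RR_def)
  have H: "E \<le> ereal (c * r)" if r: "r \<in> RR x y" for r
  proof -
    obtain p where p: "edit_path x y p" "r = real (wgt p) / real (length p)"
      using r unfolding RR_def by blast
    obtain y' where y': "y' \<in> Y" "real (ed x y') / real (length x) \<le> c * r"
      using key[OF D Y y p(1) x] p(2) c_def by blast
    have "E \<le> ereal (real (ed x y') / real (length x))" unfolding E_def using y'(1) by (rule INF_lower)
    also have "\<dots> \<le> ereal (c * r)" using y'(2) by simp
    finally show ?thesis .
  qed
  obtain r0 where r0: "r0 \<in> RR x y" using RR_ne by blast
  have "E \<le> ereal (c * ned x y)"
  proof (cases E)
    case (real e)
    have "e / c \<le> r" if "r \<in> RR x y" for r
      using H[OF that] real c0 by (simp add: divide_simps mult.commute)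
    then have "e / c \<le> Inf (RR x y)" using RR_ne by (intro cInf_greatest) auto
    then have "e \<le> c * ned x y" using c0 nedI by (simp add: divide_simps mult.commute)
    then show ?thesis using real by simp
  next
    case PInf
    then show ?thesis using H[OF r0] by simp
  next
    case MInf
    then show ?thesis by simp
  qed
  then show ?thesis unfolding E_def c_def .
qed

lemma fg:
  assumes D: "dfa Alph Q q0 \<delta> F" and Y: "Y = dfa_lang Alph q0 \<delta> F" and x: "x \<noteq> []"
  shows "(INF y\<in>Y. ereal (real (ed x y) / real (length x))) \<le>
     ereal (real (card Q) + real (card Q - 1) / real (length x)) * (INF y\<in>Y. ereal (ned x y))"
proof -
  define c where "c = real (card Q) + real (card Q - 1) / real (length x)"
  have q0: "q0 \<in> Q" using D by (simp add: dfa_def)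
  have cQ: "card Q \<ge> 1" using D q0 by (metis One_nat_def Suc_leI card_gt_0_iff dfa_def empty_iff)
  have c0: "c > 0" unfolding c_def using cQ by (simp add: add_pos_nonneg)
  have eq: "ereal c * (INF y\<in>Y. ereal (ned x y)) =
      Inf {ereal c * z | z. z \<in> (\<lambda>y. ereal (ned x y)) ` Y}"
    using ereal_Inf_cmult[OF c0, of "\<lambda>z. z \<in> (\<lambda>y. ereal (ned x y)) ` Y"] by simp
  have "(INF y\<in>Y. ereal (real (ed x y) / real (length x))) \<le>
      Inf {ereal c * z | z. z \<in> (\<lambda>y. ereal (ned x y)) ` Y}"
  proof (rule Inf_greatest)
    fix w assume "w \<in> {ereal c * z | z. z \<in> (\<lambda>y. ereal (ned x y)) ` Y}"
    then obtain y where y: "y \<in> Y" "w = ereal (c * ned x y)" by auto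
    show "(INF y\<in>Y. ereal (real (ed x y) / real (length x))) \<le> w"
      using ned_bound[OF D Y y(1) x] y(2) c_def by simp
  qed
  then show ?thesis using eq c_def by simp
qed

theorem mainTheorem16:
  fixes Alph :: "'a set" and X Y :: "'a list set"
  assumes "finite Alph"
    and "regular Alph X" and "regular Alph Y"
    and "d = min_dfa_states Alph Y"
  shows "AH_ned X Y \<ge> ereal (1 / real d) * AC X Y"
proof -
  have "\<exists>Q q0 \<delta> F. dfa Alph Q q0 \<delta> F \<and> dfa_lang Alph q0 \<delta> F = Y \<and> card Q = d"
    unfolding assms(4) min_dfa_states_def
    by (rule LeastI_ex) (use assms(3) in \<open>auto simp: regular_def\<close>)
  then obtain Q q0 \<delta> F where D: "dfa Alph Q q0 \<delta> F" and Y: "Y = dfa_lang Alph q0 \<delta> F"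
    and dQ: "card Q = d" by metis
  have q0: "q0 \<in> Q" using D by (simp add: dfa_def)
  have d1: "d \<ge> 1" using D q0 dQ by (metis One_nat_def Suc_leI card_gt_0_iff dfa_def empty_iff)
  define f where "f x = (INF y\<in>Y. ereal (real (ed x y) / real (length x)))" for x
  define g where "g x = (INF y\<in>Y. ereal (ned x y))" for x
  define A where "A k = (SUP x \<in> {x \<in> X. k \<le> length x}. f x)" for k :: nat
  define B where "B k = (SUP x \<in> {x \<in> X. k \<le> length x}. g x)" for k :: nat
  define c where "c k = real d + real (d - 1) / real k" for k :: nat
  have g0: "0 \<le> g x" for x unfolding g_def by (rule INF_greatest) (simp add: ned_nonneg)
  have decA: "decseq A" unfolding decseq_def A_def by (auto intro!: SUP_subset_mono)
  have decB: "decseq B" unfolding decseq_def B_def by (auto intro!: SUP_subset_mono)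
  have AC: "A \<longlonglongrightarrow> AC X Y"
  proof -
    have "A \<longlonglongrightarrow> (INF i. A i)" using LIMSEQ_INF[OF decA] .
    moreover have "AC X Y = lim A" unfolding AC_def A_def f_def by simp
    ultimately show ?thesis using limI by metis
  qed
  have AH: "B \<longlonglongrightarrow> AH_ned X Y"
  proof -
    have "B \<longlonglongrightarrow> (INF i. B i)" using LIMSEQ_INF[OF decB] .
    moreover have "AH_ned X Y = lim B" unfolding AH_ned_def B_def g_def by simp
    ultimately show ?thesis using limI by metis
  qed
  have cl: "c \<longlonglongrightarrow> real d" unfolding c_def
    using tendsto_add[OF tendsto_const lim_const_over_n[of "real (d - 1)"]] by simp
  have prod: "(\<lambda>k. ereal (c k) * B k) \<longlonglongrightarrow> ereal (real d) * AH_ned X Y"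
    by (rule tendsto_mult_ereal) (use cl AH d1 in auto)
  have le: "A k \<le> ereal (c k) * B k" if k: "k \<ge> 1" for k
    unfolding A_def
  proof (rule SUP_least)
    fix x assume x: "x \<in> {x \<in> X. k \<le> length x}"
    then have xn: "x \<noteq> []" using k by auto
    have "f x \<le> ereal (c (length x)) * g x"
      using fg[OF D Y xn] unfolding f_def g_def c_def dQ .
    also have "\<dots> \<le> ereal (c k) * g x"
    proof (rule ereal_mult_right_mono)
      show "ereal (c (length x)) \<le> ereal (c k)" unfolding c_def using x k
        by (auto intro!: divide_left_mono mult_pos_pos)
    qed (rule g0)
    also have "\<dots> \<le> ereal (c k) * B k"
    proof (rule ereal_mult_left_mono)
      show "g x \<le> B k" unfolding B_def using x by (rule SUP_upper)
      show "0 \<le> ereal (c k)" unfolding c_def by simp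
    qed
    finally show "f x \<le> ereal (c k) * B k" .
  qed
  have "AC X Y \<le> ereal (real d) * AH_ned X Y"
    by (rule LIMSEQ_le[OF AC prod]) (use le in auto)
  then have "ereal (1 / real d) * AC X Y \<le> ereal (1 / real d) * (ereal (real d) * AH_ned X Y)"
    by (rule ereal_mult_left_mono) simp
  also have "\<dots> = AH_ned X Y" using d1
    by (simp add: mult.assoc[symmetric])
  finally show ?thesis .
qed

end
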